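(* Let $N\ge1$, $m>1$, $\alpha,\beta\in\mathbb R$ with $N+\alpha-m>0$ and $\beta-\alpha+1>0$; let $s_0\ge0$, $\lambda>0$ and $\wp>0$. Let $u\in C^1(s_0,\infty)$ be a nonnegative solution of $$-(r^{N+\alpha-1}|u'(r)|^{m-2}u'(r))'=\lambda r^{N+\beta-1}u^{\wp}(r),\ r\in(s_0,\infty),\qquad u(s_0)=1,\quad u'(s_0)\le0.$$ Let $\varrho=\frac{N+\alpha-m}{m-1}$. Then the function $U_\varrho(r):=ru'(r)+\varrho u(r)$ is nonnegative and nonincreasing on $(s_0,\infty)$. In particular, $r^\varrho u(r)$ is nondecreasing on $(s_0,\infty)$. *)

theory Defs
  imports "HOL-Analysis.Analysis"
begin

end

theory Submission
  imports Defs
begin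

lemma spow_pos_iff: "(\<bar>x::real\<bar> powr e * x > 0) = (x > 0)"
  by (cases "x = 0") (auto simp: zero_less_mult_iff)

lemma spow_zero_iff: "(\<bar>x::real\<bar> powr e * x = 0) = (x = 0)"
  by auto

lemma spow_pos: "(x::real) > 0 \<Longrightarrow> \<bar>x\<bar> powr (m - 2) * x = x powr (m - 1)"
proof -
  assume "x > 0"
  have "x powr (m - 1) = x powr ((m - 2) + 1)" by simp
  also have "\<dots> = x powr (m - 2) * x powr 1" by (rule powr_add)
  finally show ?thesis using \<open>x > 0\<close> by simp
qed

lemma spow_neg: "(x::real) < 0 \<Longrightarrow> \<bar>x\<bar> powr (m - 2) * x = - ((- x) powr (m - 1))"
  using spow_pos[of "-x" m] by simp

theorem lemma3p1:
  fixes N :: nat and m \<alpha> \<beta> s0 lam p :: real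
    and u u' :: "real \<Rightarrow> real"
  assumes "N \<ge> 1" and "m > 1"
    and "real N + \<alpha> - m > 0" and "\<beta> - \<alpha> + 1 > 0"
    and "s0 \<ge> 0" and "lam > 0" and "p > 0"
    and deriv_u: "\<forall>r\<ge>s0. (u has_real_derivative u' r) (at r within {s0..})"
    and cont_u': "continuous_on {s0<..} u'"
    and nonneg: "\<forall>r\<ge>s0. u r \<ge> 0"
    and ode: "\<forall>r>s0. ((\<lambda>t. t powr (real N + \<alpha> - 1) * (\<bar>u' t\<bar> powr (m - 2) * u' t))
                 has_real_derivative (- lam * r powr (real N + \<beta> - 1) * u r powr p)) (at r)"
    and "u s0 = 1" and "u' s0 \<le> 0"
  shows "(\<forall>r>s0. r * u' r + ((real N + \<alpha> - m) / (m - 1)) * u r \<ge> 0)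
       \<and> (\<forall>r t. s0 < r \<and> r \<le> t \<longrightarrow>
            t * u' t + ((real N + \<alpha> - m) / (m - 1)) * u t
              \<le> r * u' r + ((real N + \<alpha> - m) / (m - 1)) * u r)
       \<and> (\<forall>r t. s0 < r \<and> r \<le> t \<longrightarrow>
            r powr ((real N + \<alpha> - m) / (m - 1)) * u r
              \<le> t powr ((real N + \<alpha> - m) / (m - 1)) * u t)"
proof -
  define k where "k = real N + \<alpha> - 1"
  define \<rho> where "\<rho> = (real N + \<alpha> - m) / (m - 1)"
  define q where "q = real N + \<beta> - 1"
  define w where "w t = t powr k * (\<bar>u' t\<bar> powr (m - 2) * u' t)" for t
  define A where "A t = lam * t powr q * u t powr p" for t
  have kpos: "k > 0" using assms(2,3) unfolding k_def by simp
  have rhopos: "\<rho> > 0" using assms(2,3) unfolding \<rho>_def by simp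
  have Apos: "A t \<ge> 0" for t using assms(6) unfolding A_def by simp
  have wd: "(w has_real_derivative (- A r)) (at r)" if "r > s0" for r
    using ode that unfolding w_def k_def A_def q_def by simp
  have du: "(u has_real_derivative u' r) (at r)" if "r > s0" for r
  proof -
    have "r \<in> interior {s0..}" using that by simp
    moreover have "(u has_real_derivative u' r) (at r within {s0..})" using deriv_u that by auto
    ultimately show ?thesis using at_within_interior[of r "{s0..}"] by simp
  qed
  have contu: "continuous_on {s0..} u"
    unfolding continuous_on_eq_continuous_within
    using deriv_u by (auto intro: DERIV_continuous)
  have wmono: "w b \<le> w a" if "s0 < a" "a \<le> b" for a b
  proof (rule DERIV_nonpos_imp_nonincreasing[of a b w])
    fix x assume "a \<le> x" "x \<le> b"
    then show "\<exists>y. (w has_real_derivative y) (at x) \<and> y \<le> 0"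
      using that wd[of x] Apos[of x] by (intro exI[of _ "- A x"]) auto
  qed (use that in auto)
  have wpow: "w r = r powr k * (u' r) powr (m - 1)" if "u' r > 0" for r
    using spow_pos[OF that, of m] unfolding w_def by simp
  have wneg: "w r = - (r powr k * (- u' r) powr (m - 1))" if "u' r < 0" for r
    using spow_neg[OF that, of m] unfolding w_def by simp
  have u'nonpos: "u' r \<le> 0" if "r > s0" for r
  proof (rule ccontr)
    assume "\<not> u' r \<le> 0"
    then have r1: "u' r > 0" by simp
    define \<delta> where "\<delta> = u' r"
    have ge: "u' x \<ge> \<delta>" if "s0 < x" "x \<le> r" for x
    proof -
      have x0: "x > 0" using that assms(5) by simp
      have "w x \<ge> w r" using wmono that by simp
      moreover have "w r > 0" using wpow[OF r1] r1 \<open>r > s0\<close> assms(5) by simp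
      ultimately have "w x > 0" by simp
      then have "u' x > 0" using x0 unfolding w_def by (simp add: zero_less_mult_iff spow_pos_iff)
      have "r powr k * \<delta> powr (m - 1) \<le> x powr k * u' x powr (m - 1)"
        using \<open>w x \<ge> w r\<close> wpow[OF r1] wpow[OF \<open>u' x > 0\<close>] unfolding \<delta>_def by simp
      moreover have "x powr k \<le> r powr k" using x0 that kpos by (simp add: powr_mono2)
      ultimately have "x powr k * \<delta> powr (m - 1) \<le> x powr k * u' x powr (m - 1)"
        by (smt (verit) mult_right_mono powr_ge_zero)
      then have "\<delta> powr (m - 1) \<le> u' x powr (m - 1)" using x0 by simp
      then show ?thesis using powr_less_mono2[of "m - 1" "u' x" \<delta>] assms(2) \<open>u' x > 0\<close>
        by (meson diff_gt_0_iff_gt linorder_not_le order_less_le)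
    qed
    define f where "f x = u x - \<delta> * x" for x
    have fc: "continuous_on {s0..} f" unfolding f_def
      by (intro continuous_intros contu)
    have finc: "f s0 \<le> f x" if "s0 < x" "x \<le> r" for x
    proof (rule DERIV_nonneg_imp_increasing_open[of s0 x f])
      show "continuous_on {s0..x} f" using fc by (rule continuous_on_subset) auto
      fix y assume "s0 < y" "y < x"
      then show "\<exists>z. (f has_real_derivative z) (at y) \<and> 0 \<le> z"
        using ge[of y] that du[of y] unfolding f_def
        by (intro exI[of _ "u' y - \<delta>"]) (auto intro!: derivative_eq_intros)
    qed (use that in auto)
    have "(f has_real_derivative (u' s0 - \<delta>)) (at s0 within {s0..})"
      unfolding f_def using deriv_u by (auto intro!: derivative_eq_intros)
    moreover have "u' s0 - \<delta> < 0" using r1 assms(13) unfolding \<delta>_def by simp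
    ultimately obtain d where d: "d > 0" "\<forall>h>0. s0 + h \<in> {s0..} \<longrightarrow> h < d \<longrightarrow> f s0 > f (s0 + h)"
      using has_real_derivative_neg_dec_right by blast
    define h where "h = min (d/2) (r - s0)"
    have "h > 0" "h < d" "s0 + h \<le> r" using d \<open>r > s0\<close> unfolding h_def by auto
    then show False using d(2) finc[of "s0 + h"] by auto
  qed
  have wnonpos: "w r \<le> 0" if "r > s0" for r
    using u'nonpos[OF that] unfolding w_def by (simp add: mult_nonneg_nonpos)
  have wneg0: "w r < 0" if "r > s0" for r
  proof (rule ccontr)
    assume "\<not> w r < 0"
    then have w0: "w r = 0" using wnonpos[OF that] by simp
    have wz: "w x = 0" if "s0 < x" "x \<le> r" for x
      using wmono[OF that] wnonpos[of x] that w0 by simp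
    have u'z: "u' x = 0" if "s0 < x" "x \<le> r" for x
      using wz[OF that] that assms(5) unfolding w_def by simp
    have uz: "u x = 0" if xr: "s0 < x" "x < r" for x
    proof (rule ccontr)
      assume "u x \<noteq> 0"
      then have "u x > 0" using nonneg that by (simp add: order_le_neq_trans)
      then have "A x > 0" using that assms(5,6) unfolding A_def by simp
      then obtain d where d: "d > 0" "\<forall>h>0. h < d \<longrightarrow> w x > w (x + h)"
        using DERIV_neg_dec_right[OF wd[of x]] xr by auto
      define h where "h = min (d/2) ((r - x)/2)"
      have "h > 0" "h < d" "x + h \<le> r" using d xr unfolding h_def by (auto simp: min_def field_simps)
      then show False using d(2) wz[of "x+h"] wz[of x] that by auto
    qed
    define r2 where "r2 = (s0 + r) / 2"
    have r2: "s0 < r2" "r2 < r" using that unfolding r2_def by auto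
    have "u s0 \<le> u r2"
    proof (rule DERIV_nonneg_imp_increasing_open[of s0 r2 u])
      show "continuous_on {s0..r2} u" using contu by (rule continuous_on_subset) auto
      fix y assume "s0 < y" "y < r2"
      then show "\<exists>z. (u has_real_derivative z) (at y) \<and> 0 \<le> z"
        using du[of y] u'z[of y] r2 by auto
    qed (use r2 in auto)
    then show False using uz[OF r2] assms(12) by simp
  qed
  define e where "e = 1 / (m - 1)"
  define G where "G x = (- w x) powr e * x powr (- \<rho>)" for x
  define H where "H x = \<rho> * u x - G x" for x
  have keq: "k * e - \<rho> = 1"
  proof -
    have "k * e - \<rho> = (k - (real N + \<alpha> - m)) / (m - 1)"
      unfolding e_def \<rho>_def by (simp add: diff_divide_distrib)
    also have "k - (real N + \<alpha> - m) = m - 1" unfolding k_def by simp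
    finally show ?thesis using assms(2) by simp
  qed
  have uG: "x * u' x = - G x" if "x > s0" for x
  proof -
    have x0: "x > 0" using that assms(5) by simp
    have "u' x \<noteq> 0" using wneg0[OF that] unfolding w_def by auto
    then have un: "u' x < 0" using u'nonpos[OF that] by simp
    have "(- w x) powr e = (x powr k) powr e * ((- u' x) powr (m - 1)) powr e"
      using wneg[OF un] by (simp add: powr_mult)
    also have "\<dots> = x powr (k * e) * (- u' x)"
      using assms(2) un unfolding e_def by (simp add: powr_powr)
    finally have "G x = x powr (k * e) * x powr (- \<rho>) * (- u' x)"
      unfolding G_def by simp
    also have "x powr (k * e) * x powr (- \<rho>) = x powr (k * e - \<rho>)"
      by (simp add: powr_add[symmetric])
    finally show ?thesis using keq x0 by simp
  qed
  have Hd: "\<exists>y. (H has_real_derivative y) (at x) \<and> y \<le> 0" if "x > s0" for x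
  proof -
    have x0: "x > 0" using that assms(5) by simp
    have wx: "- w x > 0" using wneg0[OF that] by simp
    have d1: "((\<lambda>x. - w x) has_real_derivative A x) (at x)"
      using wd[OF that] by (auto intro!: derivative_eq_intros)
    have d2: "((\<lambda>x. (- w x) powr e) has_real_derivative e * (- w x) powr (e - 1) * A x) (at x)"
      using DERIV_fun_powr[OF d1 wx, of e] by simp
    have d3: "((\<lambda>x. x powr (- \<rho>)) has_real_derivative (- \<rho>) * x powr (- \<rho> - 1)) (at x)"
      using has_real_derivative_powr[OF x0, of "- \<rho>"] by simp
    have dH: "(H has_real_derivative (\<rho> * u' x - (e * (- w x) powr (e - 1) * A x * x powr (- \<rho>)
        + (- w x) powr e * ((- \<rho>) * x powr (- \<rho> - 1))))) (at x)"
      using DERIV_diff[OF DERIV_cmult[OF du[OF that], of \<rho>] DERIV_mult[OF d2 d3]]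
      unfolding H_def G_def by (simp add: algebra_simps)
    have "x powr (- \<rho> - 1) = x powr (- \<rho>) / x"
      using x0 by (simp add: powr_diff)
    then have "(- w x) powr e * ((- \<rho>) * x powr (- \<rho> - 1)) = - \<rho> * G x / x"
      unfolding G_def by simp
    also have "\<dots> = \<rho> * u' x" using uG[OF that] x0 by (simp add: field_simps)
    finally have eq: "(- w x) powr e * ((- \<rho>) * x powr (- \<rho> - 1)) = \<rho> * u' x" .
    have "e > 0" unfolding e_def using assms(2) by simp
    then have "e * (- w x) powr (e - 1) * A x * x powr (- \<rho>) \<ge> 0" using Apos[of x] by simp
    moreover have val: "\<rho> * u' x - (e * (- w x) powr (e - 1) * A x * x powr (- \<rho>)
        + (- w x) powr e * ((- \<rho>) * x powr (- \<rho> - 1))) = - (e * (- w x) powr (e - 1) * A x * x powr (- \<rho>))"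
      unfolding eq by simp
    moreover note dH[unfolded val]
    ultimately show ?thesis by (intro exI[of _ "- (e * (- w x) powr (e - 1) * A x * x powr (- \<rho>))"]) simp
  qed
  have UH: "x * u' x + \<rho> * u x = H x" if "x > s0" for x
    using uG[OF that] unfolding H_def by simp
  have Umono: "t * u' t + \<rho> * u t \<le> r * u' r + \<rho> * u r" if "s0 < r" "r \<le> t" for r t
  proof -
    have "H t \<le> H r"
      by (rule DERIV_nonpos_imp_nonincreasing[of r t H]) (use that Hd in auto)
    then show ?thesis using UH that by simp
  qed
  have dP: "((\<lambda>x. x powr \<rho>) has_real_derivative x powr (\<rho> - 1) * \<rho>) (at x)" if "x > s0" for x
  proof -
    have x0: "x > 0" using that assms(5) by simp
    show ?thesis using has_real_derivative_powr[OF x0, of \<rho>] by (simp add: mult.commute)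
  qed
  have dQ: "((\<lambda>x. x powr \<rho> * u x) has_real_derivative x powr (\<rho> - 1) * (x * u' x + \<rho> * u x)) (at x)"
    if "x > s0" for x
  proof -
    have x0: "x > 0" using that assms(5) by simp
    have xe: "x powr \<rho> = x powr (\<rho> - 1) * x"
    proof -
      have "x powr \<rho> = x powr ((\<rho> - 1) + 1)" by simp
      also have "\<dots> = x powr (\<rho> - 1) * x powr 1" by (rule powr_add)
      finally show ?thesis using x0 by simp
    qed
    have "((\<lambda>x. x powr \<rho> * u x) has_real_derivative
        x powr (\<rho> - 1) * \<rho> * u x + u' x * x powr \<rho>) (at x)"
      by (rule DERIV_mult[OF dP[OF that] du[OF that]])
    moreover have "x powr (\<rho> - 1) * \<rho> * u x + u' x * x powr \<rho> = x powr (\<rho> - 1) * (x * u' x + \<rho> * u x)"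
      unfolding xe by (simp add: algebra_simps)
    ultimately show ?thesis by simp
  qed
  have Unonneg: "r * u' r + \<rho> * u r \<ge> 0" if "r > s0" for r
  proof (rule ccontr)
    assume neg: "\<not> ?thesis"
    define c where "c = - (r * u' r + \<rho> * u r)"
    have c0: "c > 0" using neg unfolding c_def by simp
    define g where "g x = x powr \<rho> * u x + (c / \<rho>) * x powr \<rho>" for x
    have gdec: "g t \<le> g r" if "r \<le> t" for t
    proof (rule DERIV_nonpos_imp_nonincreasing[of r t g])
      fix x assume x: "r \<le> x" "x \<le> t"
      have xs: "x > s0" using x \<open>r > s0\<close> by simp
      have "(g has_real_derivative x powr (\<rho> - 1) * (x * u' x + \<rho> * u x) + c / \<rho> * (x powr (\<rho> - 1) * \<rho>)) (at x)"
        unfolding g_def by (intro DERIV_add DERIV_cmult dQ[OF xs] dP[OF xs])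
      moreover have "x powr (\<rho> - 1) * (x * u' x + \<rho> * u x) + c / \<rho> * (x powr (\<rho> - 1) * \<rho>)
          = x powr (\<rho> - 1) * ((x * u' x + \<rho> * u x) + c)" using rhopos by (simp add: algebra_simps)
      moreover have "(x * u' x + \<rho> * u x) + c \<le> 0" using Umono[OF \<open>r > s0\<close> x(1)] unfolding c_def by simp
      ultimately show "\<exists>y. (g has_real_derivative y) (at x) \<and> y \<le> 0"
        by (intro exI[of _ "x powr (\<rho> - 1) * ((x * u' x + \<rho> * u x) + c)"])
          (simp add: mult_nonneg_nonpos)
    qed (use that in auto)
    define M where "M = \<bar>\<rho> * g r / c\<bar> + 1"
    define R where "R = r + M powr (1 / \<rho>)"
    have M0: "M > 0" unfolding M_def by (smt (verit) abs_ge_zero)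
    have Rr: "R \<ge> r" unfolding R_def by simp
    have R0: "R > 0" using Rr \<open>r > s0\<close> assms(5) by simp
    have "R powr \<rho> \<ge> (M powr (1 / \<rho>)) powr \<rho>"
      using rhopos assms(5) \<open>r > s0\<close> unfolding R_def by (intro powr_mono2) auto
    also have "(M powr (1 / \<rho>)) powr \<rho> = M" using M0 rhopos by (simp add: powr_powr)
    finally have RM: "R powr \<rho> \<ge> M" .
    have "g R \<ge> (c / \<rho>) * R powr \<rho>"
      unfolding g_def using nonneg Rr \<open>r > s0\<close> by simp
    moreover have "(c / \<rho>) * R powr \<rho> \<ge> (c / \<rho>) * M"
      using RM c0 rhopos by (intro mult_left_mono) auto
    moreover have "(c / \<rho>) * M > g r"
    proof -
      have "M > \<rho> * g r / c" unfolding M_def by linarith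
      then have "(c / \<rho>) * M > (c / \<rho>) * (\<rho> * g r / c)" using c0 rhopos by (intro mult_strict_left_mono) auto
      also have "(c / \<rho>) * (\<rho> * g r / c) = g r" using c0 rhopos by simp
      finally show ?thesis .
    qed
    ultimately show False using gdec[OF Rr] by simp
  qed
  have Pmono: "r powr \<rho> * u r \<le> t powr \<rho> * u t" if "s0 < r" "r \<le> t" for r t
  proof (rule DERIV_nonneg_imp_nondecreasing[of r t "\<lambda>x. x powr \<rho> * u x"])
    fix x assume x: "r \<le> x" "x \<le> t"
    have xs: "x > s0" using x that by simp
    show "\<exists>y. ((\<lambda>x. x powr \<rho> * u x) has_real_derivative y) (at x) \<and> y \<ge> 0"
      using dQ[OF xs] Unonneg[OF xs] by (intro exI[of _ "x powr (\<rho> - 1) * (x * u' x + \<rho> * u x)"]) simp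
  qed (use that in auto)
  show ?thesis using Unonneg Umono Pmono unfolding \<rho>_def by blast
qed

end
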